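(* Let $\pi\in S_n$ and ${\bf m}\in\mathrm{GL}_n(k)$. (1) If $\pi\in\mathcal P_{\bf q}$, then ${\bf r}_\pi\in M(\mathcal{O}_{\bf q}(k^{n}))$. (2) If ${\bf m}\in M(\mathcal{O}_{\bf q}(k^{n}))$, then $\mathrm{Skel}({\bf m})\subseteq\mathcal P_{\bf q}$.
   Context: Let $k$ be a field, $n\ge1$, and ${\bf q}=(q_{ij})\in\mathcal M_n(k)$ with $q_{ij}q_{ji}=1$, $q_{ii}=1$ for all $i,j$. $\mathcal{O}_{\bf q}(k^{n})=k\langle x_1,\dots,x_n\rangle/\langle x_jx_i-q_{ij}x_ix_j\rangle$, graded with $\deg x_i=1$. $M(\mathcal{O}_{\bf q}(k^{n}))$ is the set of $A=(a_{ij})\in \mathrm{GL}_n(k)$ such that $x_i\mapsto \sum_j a_{ji}x_j$ extends to a graded algebra automorphism of $\mathcal{O}_{\bf q}(k^{n})$ (a subgroup of $\mathrm{GL}_n(k)$). The set of compatible permutations is $\mathcal P_{\bf q}=\{\pi\in S_n: q_{\pi(i)\pi(j)}=q_{ij}\ \forall\,1\le i,j\le n\}$, a subgroup of $S_n$. For $\pi\in S_n$, ${\bf r}_\pi=(r_{ij})$ is the permutation matrix with $r_{ij}=1$ if $i=\pi(j)$ and $r_{ij}=0$ otherwise. For ${\bf m}=(m_{ij})\in\mathrm{GL}_n(k)$, $\mathrm{Skel}({\bf m})=\{\pi\in S_n: m_{\pi(i)i}\neq0\ \forall\,1\le i\le n\}$ (nonempty since $\det{\bf m}\ne0$). *)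

theory Defs
  imports "Jordan_Normal_Form.Determinant" "HOL-Combinatorics.Permutations"
begin

text \<open>Indices are 0-based: x_0, ..., x_(n-1); matrices are n x n over a field 'k.\<close>

text \<open>Free algebra k<x_0,...,x_(n-1)>: coefficient functions on words (lists of letters).\<close>

definition fa_elems :: "nat \<Rightarrow> (nat list \<Rightarrow> 'k::field) set" where
  "fa_elems n = {f. finite {w. f w \<noteq> 0} \<and> (\<forall>w. f w \<noteq> 0 \<longrightarrow> set w \<subseteq> {..<n})}"

definition fa_mult :: "(nat list \<Rightarrow> 'k::field) \<Rightarrow> (nat list \<Rightarrow> 'k) \<Rightarrow> nat list \<Rightarrow> 'k" where
  "fa_mult f g = (\<lambda>w. \<Sum>i\<le>length w. f (take i w) * g (drop i w))"

definition fa_word :: "nat list \<Rightarrow> nat list \<Rightarrow> 'k::field" where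
  "fa_word w = (\<lambda>u. if u = w then 1 else 0)"

definition qrel :: "'k::field mat \<Rightarrow> nat \<Rightarrow> nat \<Rightarrow> nat list \<Rightarrow> 'k" where
  "qrel q i j = (\<lambda>u. fa_word [j, i] u - q $$ (i, j) * fa_word [i, j] u)"

inductive_set qideal :: "'k::field mat \<Rightarrow> nat \<Rightarrow> (nat list \<Rightarrow> 'k) set"
  for q :: "'k mat" and n :: nat where
  zero: "(\<lambda>_. 0) \<in> qideal q n"
| add: "f \<in> qideal q n \<Longrightarrow> g \<in> qideal q n \<Longrightarrow> (\<lambda>w. f w + g w) \<in> qideal q n"
| gen: "a \<in> fa_elems n \<Longrightarrow> b \<in> fa_elems n \<Longrightarrow> i < n \<Longrightarrow> j < n \<Longrightarrow>
        fa_mult (fa_mult a (qrel q i j)) b \<in> qideal q n"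

definition lin_img :: "nat \<Rightarrow> 'k::field mat \<Rightarrow> nat \<Rightarrow> nat list \<Rightarrow> 'k" where
  "lin_img n A l = (\<lambda>u. case u of [j] \<Rightarrow> if j < n then A $$ (j, l) else 0 | _ \<Rightarrow> 0)"

definition word_img :: "nat \<Rightarrow> 'k::field mat \<Rightarrow> nat list \<Rightarrow> nat list \<Rightarrow> 'k" where
  "word_img n A w = foldr (\<lambda>l acc. fa_mult (lin_img n A l) acc) w (fa_word [])"

definition fa_hom :: "nat \<Rightarrow> 'k::field mat \<Rightarrow> (nat list \<Rightarrow> 'k) \<Rightarrow> nat list \<Rightarrow> 'k" where
  "fa_hom n A f = (\<lambda>u. \<Sum>w\<in>{w. f w \<noteq> 0}. f w * word_img n A w u)"

text \<open>M(O_q(k^n)): invertible A such that x_i |-> sum_j a_ji x_j extends to an (automatically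
  graded) algebra automorphism of O_q = free algebra / qideal, i.e. the free-algebra
  endomorphism preserves the ideal and the induced map on the quotient is bijective.\<close>
definition Mq :: "'k::field mat \<Rightarrow> nat \<Rightarrow> 'k mat set" where
  "Mq q n = {A. A \<in> carrier_mat n n \<and> det A \<noteq> 0 \<and>
     (\<forall>f\<in>qideal q n. fa_hom n A f \<in> qideal q n) \<and>
     (\<forall>g\<in>fa_elems n. \<exists>f\<in>fa_elems n. (\<lambda>w. fa_hom n A f w - g w) \<in> qideal q n) \<and>
     (\<forall>f\<in>fa_elems n. fa_hom n A f \<in> qideal q n \<longrightarrow> f \<in> qideal q n)}"

definition Pq :: "'k::field mat \<Rightarrow> nat \<Rightarrow> (nat \<Rightarrow> nat) set" where
  "Pq q n = {\<pi>. \<pi> permutes {..<n} \<and> (\<forall>i<n. \<forall>j<n. q $$ (\<pi> i, \<pi> j) = q $$ (i, j))}"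

definition perm_matrix :: "nat \<Rightarrow> (nat \<Rightarrow> nat) \<Rightarrow> 'k::field mat" where
  "perm_matrix n \<pi> = mat n n (\<lambda>(i, j). if i = \<pi> j then 1 else 0)"

definition Skel :: "nat \<Rightarrow> 'k::field mat \<Rightarrow> (nat \<Rightarrow> nat) set" where
  "Skel n m = {\<pi>. \<pi> permutes {..<n} \<and> (\<forall>i<n. m $$ (\<pi> i, i) \<noteq> 0)}"

end

theory Submission
  imports Defs
begin


lemma fa_mult_Nil: "fa_mult f g [] = f [] * g []"
  by (simp add: fa_mult_def)
lemma fa_mult_1: "fa_mult f g [x] = f [] * g [x] + f [x] * g []"
  by (simp add: fa_mult_def atMost_Suc)
lemma fa_mult_2: "fa_mult f g [x,y] = f [] * g [x,y] + f [x] * g [y] + f [x,y] * g []"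
  by (simp add: fa_mult_def atMost_Suc)

lemma fa_mult_unit_r: "fa_mult f (fa_word []) = f"
proof
  fix w
  have "fa_mult f (fa_word []) w = (\<Sum>i\<le>length w. if i = length w then f w else 0)"
    unfolding fa_mult_def fa_word_def by (intro sum.cong) auto
  then show "fa_mult f (fa_word []) w = f w" by simp
qed

lemma fa_mult_unit_l: "fa_mult (fa_word []) f = f"
proof
  fix w
  have "fa_mult (fa_word []) f w = (\<Sum>i\<le>length w. if i = 0 then f w else 0)"
    unfolding fa_mult_def fa_word_def by (intro sum.cong) auto
  then show "fa_mult (fa_word []) f w = f w" by simp
qed

lemma fa_mult_word: "fa_mult (fa_word u) (fa_word v) = (fa_word (u @ v) :: nat list \<Rightarrow> 'k::field)"
proof
  fix w
  have "fa_mult (fa_word u) (fa_word v) w = (\<Sum>i\<le>length w. if i = length u \<and> w = u @ v then (1::'k) else 0)"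
    unfolding fa_mult_def fa_word_def
  proof (intro sum.cong refl)
    fix i assume "i \<in> {..length w}"
    show "(if take i w = u then 1 else 0) * (if drop i w = v then 1 else 0) =
      (if i = length u \<and> w = u @ v then (1::'k) else 0)"
      using \<open>i \<in> {..length w}\<close>
      by (auto simp: append_eq_conv_conj)
  qed
  also have "\<dots> = (if w = u @ v then 1 else 0)"
    by (auto simp: sum.delta)
  also have "\<dots> = (fa_word (u @ v) w :: 'k)" by (simp add: fa_word_def)
  finally show "fa_mult (fa_word u) (fa_word v) w = (fa_word (u @ v) w :: 'k)" .
qed

lemma fa_word_elems: "set w \<subseteq> {..<n} \<Longrightarrow> fa_word w \<in> fa_elems n"
  unfolding fa_elems_def fa_word_def by auto

lemma fa_mult_supp:
  "{w. fa_mult f g w \<noteq> 0} \<subseteq> (\<lambda>(a,b). a @ b) ` ({w. f w \<noteq> 0} \<times> {w. g w \<noteq> 0})"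
proof
  fix w assume "w \<in> {w. fa_mult f g w \<noteq> 0}"
  then obtain i where "f (take i w) * g (drop i w) \<noteq> 0"
    unfolding fa_mult_def by (auto elim: sum.not_neutral_contains_not_neutral)
  then show "w \<in> (\<lambda>(a,b). a @ b) ` ({w. f w \<noteq> 0} \<times> {w. g w \<noteq> 0})"
    by (auto intro!: image_eqI[where x="(take i w, drop i w)"])
qed

lemma fa_mult_elems:
  assumes "f \<in> fa_elems n" "g \<in> fa_elems n" shows "fa_mult f g \<in> fa_elems n"
proof -
  have "finite {w. fa_mult f g w \<noteq> 0}"
    using assms by (intro finite_subset[OF fa_mult_supp]) (auto simp: fa_elems_def)
  moreover have "set w \<subseteq> {..<n}" if "fa_mult f g w \<noteq> 0" for w
  proof -
    from that have "w \<in> (\<lambda>(a,b). a @ b) ` ({w. f w \<noteq> 0} \<times> {w. g w \<noteq> 0})"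
      using fa_mult_supp by blast
    then obtain a b where "w = a @ b" "f a \<noteq> 0" "g b \<noteq> 0" by auto
    then show ?thesis using assms unfolding fa_elems_def by auto
  qed
  ultimately show ?thesis by (simp add: fa_elems_def)
qed

lemma add_elems:
  assumes "f \<in> fa_elems n" "g \<in> fa_elems n" shows "(\<lambda>w. f w + g w) \<in> fa_elems n"
proof -
  have "{w. f w + g w \<noteq> 0} \<subseteq> {w. f w \<noteq> 0} \<union> {w. g w \<noteq> 0}" by auto
  then show ?thesis using assms unfolding fa_elems_def
    by (auto intro: finite_subset)
qed

lemma qrel_supp': "qrel q i j w \<noteq> 0 \<Longrightarrow> w = [j,i] \<or> w = [i,j]"
  unfolding qrel_def fa_word_def by (metis (mono_tags, lifting) cancel_comm_monoid_add_class.diff_cancel mult_zero_right)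

lemma qrel_supp: "{w. qrel q i j w \<noteq> 0} \<subseteq> {[j,i],[i,j]}"
  using qrel_supp' by blast

lemma qrel_elems: assumes "i < n" "j < n" shows "qrel q i j \<in> fa_elems n"
proof -
  have "finite {w. qrel q i j w \<noteq> 0}" by (rule finite_subset[OF qrel_supp]) simp
  moreover have "set w \<subseteq> {..<n}" if "qrel q i j w \<noteq> 0" for w
    using qrel_supp'[OF that] \<open>i < n\<close> \<open>j < n\<close> by auto
  ultimately show ?thesis by (simp add: fa_elems_def)
qed

lemma qideal_elems: "f \<in> qideal q n \<Longrightarrow> f \<in> fa_elems n"
proof (induction rule: qideal.induct)
  case zero then show ?case by (simp add: fa_elems_def)
next
  case (add f g) then show ?case by (intro add_elems add.IH)
next
  case (gen a b i j) then show ?case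
    by (intro fa_mult_elems qrel_elems) auto
qed

abbreviation ivs :: "(nat \<Rightarrow> nat) \<Rightarrow> nat \<Rightarrow> nat" where "ivs s \<equiv> inv_into UNIV s"

definition rel :: "(nat \<Rightarrow> nat) \<Rightarrow> (nat list \<Rightarrow> 'k) \<Rightarrow> nat list \<Rightarrow> 'k" where
  "rel s f = (\<lambda>w. f (map s w))"

lemma rel_mult: "rel s (fa_mult f g) = fa_mult (rel s f) (rel s g)"
  by (simp add: rel_def fa_mult_def take_map drop_map)

lemma map_inv_eq:
  assumes "bij s" shows "(map (ivs s) u = v) = (u = map s v)"
proof -
  have "map s (map (ivs s) u) = u" using assms by (simp add: bij_is_surj surj_f_inv_f map_idI)
  moreover have "map (ivs s) (map s v) = v" using assms by (simp add: bij_is_inj map_idI)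
  ultimately show ?thesis by metis
qed

lemma rel_elems:
  assumes "t permutes {..<n}" "f \<in> fa_elems n" shows "rel t f \<in> fa_elems n"
proof -
  have b: "bij t" using assms(1) by (rule permutes_bij)
  have "{w. rel t f w \<noteq> 0} \<subseteq> map (ivs t) ` {w. f w \<noteq> 0}"
  proof
    fix w assume "w \<in> {w. rel t f w \<noteq> 0}"
    moreover have "w = map (ivs t) (map t w)" using map_inv_eq[OF b] by metis
    ultimately show "w \<in> map (ivs t) ` {w. f w \<noteq> 0}" by (intro rev_image_eqI[where x="map t w"]) (auto simp: rel_def)
  qed
  then have "finite {w. rel t f w \<noteq> 0}" using assms(2)
    by (auto simp: fa_elems_def intro: finite_subset)
  moreover have "set w \<subseteq> {..<n}" if "rel t f w \<noteq> 0" for w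
  proof
    fix x assume x: "x \<in> set w"
    have "f (map t w) \<noteq> 0" using that by (simp add: rel_def)
    then have "set (map t w) \<subseteq> {..<n}" using assms(2) unfolding fa_elems_def by blast
    then have "t x < n" using x by auto
    then show "x \<in> {..<n}" using assms(1) by (metis lessThan_iff permutes_def)
  qed
  ultimately show ?thesis by (simp add: fa_elems_def)
qed

lemma rel_qrel:
  assumes "bij s" "q $$ (s i, s j) = q $$ (i, j)"
  shows "rel (ivs s) (qrel q i j) = qrel q (s i) (s j)"
  using assms unfolding rel_def qrel_def fa_word_def
  by (simp add: map_inv_eq[OF assms(1)])

lemma qideal_rel:
  assumes "s \<in> Pq q n" "h \<in> qideal q n" shows "rel (ivs s) h \<in> qideal q n"
  using assms(2)
proof (induction rule: qideal.induct)
  case zero then show ?case by (simp add: rel_def qideal.zero)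
next
  case (add f g) then show ?case using qideal.add[OF add.IH] by (simp add: rel_def)
next
  case (gen a b i j)
  have p: "s permutes {..<n}" and qq: "q $$ (s i, s j) = q $$ (i, j)"
    using assms(1) gen by (auto simp: Pq_def)
  have ip: "ivs s permutes {..<n}" using p by (rule permutes_inv)
  have "rel (ivs s) (fa_mult (fa_mult a (qrel q i j)) b) =
     fa_mult (fa_mult (rel (ivs s) a) (qrel q (s i) (s j))) (rel (ivs s) b)"
    by (simp add: rel_mult rel_qrel[OF permutes_bij[OF p] qq])
  also have "\<dots> \<in> qideal q n"
    by (intro qideal.gen rel_elems[OF ip] gen) (use p gen in \<open>auto simp: permutes_def\<close>)
  finally show ?case .
qed

lemma perm_matrix_idx: "i < n \<Longrightarrow> j < n \<Longrightarrow> perm_matrix n p $$ (i,j) = (if i = p j then 1 else 0)"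
  by (simp add: perm_matrix_def)

lemma lin_img_perm:
  assumes p: "p permutes {..<n}" and l: "l < n"
  shows "lin_img n (perm_matrix n p) l = fa_word [p l]"
proof
  fix u :: "nat list"
  have pl: "p l < n" using p l by (meson lessThan_iff permutes_in_image)
  show "lin_img n (perm_matrix n p) l u = fa_word [p l] u"
  proof (cases u)
    case Nil then show ?thesis by (simp add: lin_img_def fa_word_def)
  next
    case (Cons j r)
    then show ?thesis using pl l
      by (cases r) (auto simp: lin_img_def fa_word_def perm_matrix_idx)
  qed
qed

lemma word_img_perm:
  assumes p: "p permutes {..<n}"
  shows "set w \<subseteq> {..<n} \<Longrightarrow> word_img n (perm_matrix n p :: 'k::field mat) w = fa_word (map p w)"
proof (induction w)
  case Nil then show ?case by (simp add: word_img_def)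
next
  case (Cons l w)
  have "word_img n (perm_matrix n p :: 'k mat) (l # w) = fa_mult (lin_img n (perm_matrix n p) l) (word_img n (perm_matrix n p) w)"
    by (simp add: word_img_def)
  also have "\<dots> = fa_mult (fa_word [p l]) (fa_word (map p w))"
    using Cons by (simp add: lin_img_perm[OF p])
  also have "\<dots> = fa_word (map p (l # w))" by (simp add: fa_mult_word)
  finally show ?case .
qed

lemma fa_hom_perm:
  assumes p: "p permutes {..<n}" and f: "f \<in> fa_elems n"
  shows "fa_hom n (perm_matrix n p) f = rel (ivs p) f"
proof
  fix u
  let ?S = "{w. f w \<noteq> 0}"
  have b: "bij p" using p by (rule permutes_bij)
  have "fa_hom n (perm_matrix n p) f u = (\<Sum>w\<in>?S. if w = map (ivs p) u then f w else 0)"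
    unfolding fa_hom_def
  proof (intro sum.cong refl)
    fix w assume w: "w \<in> ?S"
    then have "set w \<subseteq> {..<n}" using f by (auto simp: fa_elems_def)
    then have "f w * word_img n (perm_matrix n p) w u = f w * fa_word (map p w) u"
      by (simp add: word_img_perm[OF p])
    also have "\<dots> = (if w = map (ivs p) u then f w else 0)"
    proof -
      have e: "(u = map p w) = (w = map (ivs p) u)" using map_inv_eq[OF b, of u w] by metis
      show ?thesis by (simp only: fa_word_def e) simp
    qed
    finally show "f w * word_img n (perm_matrix n p) w u = (if w = map (ivs p) u then f w else 0)" .
  qed
  also have "\<dots> = (if map (ivs p) u \<in> ?S then f (map (ivs p) u) else 0)"
    using f by (simp add: sum.delta' fa_elems_def)
  also have "\<dots> = rel (ivs p) f u" by (simp add: rel_def)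
  finally show "fa_hom n (perm_matrix n p) f u = rel (ivs p) f u" .
qed

lemma ivs_Pq:
  assumes "p \<in> Pq q n" shows "ivs p \<in> Pq q n"
proof -
  have p: "p permutes {..<n}" and qq: "\<forall>i<n. \<forall>j<n. q $$ (p i, p j) = q $$ (i, j)"
    using assms by (auto simp: Pq_def)
  have ip: "ivs p permutes {..<n}" using p by (rule permutes_inv)
  have "q $$ (ivs p i, ivs p j) = q $$ (i, j)" if "i < n" "j < n" for i j
  proof -
    have "ivs p i < n" "ivs p j < n" using ip that by (meson lessThan_iff permutes_in_image)+
    then have "q $$ (ivs p i, ivs p j) = q $$ (p (ivs p i), p (ivs p j))" using qq by simp
    also have "\<dots> = q $$ (i, j)" using p by (simp add: permutes_inverses(1))
    finally show ?thesis .
  qed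
  then show ?thesis using ip by (simp add: Pq_def)
qed

lemma rel_rel: "rel s (rel t f) = rel (t \<circ> s) f"
  by (simp add: rel_def map_map)

lemma det_perm_matrix:
  assumes p: "p permutes {..<n}" shows "det (perm_matrix n p :: 'k::field mat) \<noteq> 0"
proof -
  let ?P = "perm_matrix n p :: 'k mat" and ?Q = "perm_matrix n (ivs p) :: 'k mat"
  have ip: "ivs p permutes {..<n}" using p by (rule permutes_inv)
  have PQ: "?P * ?Q = 1\<^sub>m n"
  proof (rule eq_matI)
    fix i j assume i: "i < dim_row (1\<^sub>m n :: 'k mat)" and j: "j < dim_col (1\<^sub>m n :: 'k mat)"
    then have i: "i < n" and j: "j < n" by auto
    have ij: "ivs p j < n" using ip j by (meson lessThan_iff permutes_in_image)
    have "(?P * ?Q) $$ (i, j) = (\<Sum>k\<in>{0..<n}. ?P $$ (i,k) * ?Q $$ (k,j))"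
      using i j by (simp add: perm_matrix_def scalar_prod_def)
    also have "\<dots> = (\<Sum>k\<in>{0..<n}. if k = ivs p j then (if i = p k then 1 else 0) else 0)"
      using i j by (intro sum.cong refl) (auto simp: perm_matrix_idx)
    also have "\<dots> = (if i = p (ivs p j) then 1 else 0)" using ij by (simp add: sum.delta')
    also have "\<dots> = (1\<^sub>m n :: 'k mat) $$ (i, j)" using i j p by (simp add: permutes_inverses(1))
    finally show "(?P * ?Q) $$ (i, j) = (1\<^sub>m n :: 'k mat) $$ (i, j)" .
  qed (auto simp: perm_matrix_def)
  have "det ?P * det ?Q = 1"
    using det_mult[of ?P n ?Q] PQ by (simp add: perm_matrix_def)
  then show ?thesis by auto
qed

lemma part1:
  assumes pq: "p \<in> Pq q n" shows "perm_matrix n p \<in> Mq q n"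
proof -
  have p: "p permutes {..<n}" using pq by (simp add: Pq_def)
  have b: "bij p" using p by (rule permutes_bij)
  have c1: "fa_hom n (perm_matrix n p) f \<in> qideal q n" if "f \<in> qideal q n" for f
    using fa_hom_perm[OF p qideal_elems[OF that]] qideal_rel[OF pq that] by simp
  have c2: "\<exists>f\<in>fa_elems n. (\<lambda>w. fa_hom n (perm_matrix n p) f w - g w) \<in> qideal q n"
    if g: "g \<in> fa_elems n" for g
  proof (intro bexI)
    have e: "rel p g \<in> fa_elems n" using rel_elems[OF p g] .
    have "fa_hom n (perm_matrix n p) (rel p g) = g"
    proof -
      have mm: "\<And>w. map p (map (ivs p) w) = w" using map_inv_eq[OF b] by metis
      have "fa_hom n (perm_matrix n p) (rel p g) = rel (ivs p) (rel p g)" using fa_hom_perm[OF p e] .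
      also have "\<dots> = g" unfolding rel_def mm by simp
      finally show ?thesis .
    qed
    then show "(\<lambda>w. fa_hom n (perm_matrix n p) (rel p g) w - g w) \<in> qideal q n"
      by (simp add: qideal.zero)
    show "rel p g \<in> fa_elems n" by (rule e)
  qed
  have c3: "f \<in> qideal q n" if f: "f \<in> fa_elems n" and h: "fa_hom n (perm_matrix n p) f \<in> qideal q n" for f
  proof -
    have "rel (ivs (ivs p)) (rel (ivs p) f) \<in> qideal q n"
      using qideal_rel[OF ivs_Pq[OF pq]] h fa_hom_perm[OF p f] by simp
    moreover have "ivs (ivs p) = p" using b by (simp add: inv_inv_eq)
    moreover have "rel p (rel (ivs p) f) = f"
      using b by (simp add: rel_rel rel_def bij_is_inj inv_o_cancel)
    ultimately show ?thesis by simp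
  qed
  show ?thesis unfolding Mq_def
    using c1 c2 c3 det_perm_matrix[OF p] by (auto simp: perm_matrix_def)
qed



definition NN :: "'k::field mat \<Rightarrow> (nat \<Rightarrow> 'k) \<Rightarrow> (nat \<Rightarrow> 'k) \<Rightarrow> nat \<Rightarrow> nat \<Rightarrow> 'k" where
  "NN q u v c d = (if c = d then u c * v c else u c * v d + q $$ (c,d) * u d * v c)"

lemma supp_lemma:
  fixes u t :: "nat \<Rightarrow> 'k::field"
  assumes qinv: "\<forall>i<n. \<forall>j<n. q $$ (i,j) * q $$ (j,i) = 1"
    and qd: "\<forall>i<n. q $$ (i,i) = 1"
    and k: "k < n" and c0: "c0 < n" and uc0: "u c0 \<noteq> 0"
    and H: "\<forall>c<n. \<forall>d<n. NN q u (\<lambda>c. if c = k then 1 else 0) c d = NN q t u c d"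
  shows "l < n \<Longrightarrow> t l = (if l = k then q $$ (k,c0) else 0)"
proof -
  have t0: "t l = 0" if l: "l < n" "l \<noteq> k" for l
  proof (rule ccontr)
    assume tl: "t l \<noteq> 0"
    show False
    proof (cases "u l = 0")
      case False
      have "NN q u (\<lambda>c. if c = k then 1 else 0) l l = NN q t u l l" using H l by blast
      then have "t l * u l = 0" using l by (simp add: NN_def)
      then show False using tl False by simp
    next
      case ul: True
      have uc: "u c = 0" if c: "c < n" "c \<noteq> k" for c
      proof (cases "c = l")
        case True then show ?thesis using ul by simp
      next
        case False
        have "NN q u (\<lambda>c. if c = k then 1 else 0) l c = NN q t u l c" using H l c by blast
        then have "t l * u c = 0" using l c False ul by (simp add: NN_def)
        then show ?thesis using tl by simp
      qed
      then have "c0 = k" using uc0 c0 by blast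
      have "NN q u (\<lambda>c. if c = k then 1 else 0) l k = NN q t u l k" using H l k by blast
      then have "t l * u k = 0" using l ul by (simp add: NN_def)
      then show False using tl uc0 \<open>c0 = k\<close> by simp
    qed
  qed
  have tk: "t k = q $$ (k,c0)"
  proof (cases "c0 = k")
    case True
    have "NN q u (\<lambda>c. if c = k then 1 else 0) k k = NN q t u k k" using H k by blast
    then have "u k = t k * u k" by (simp add: NN_def)
    then have "t k = 1" using uc0 True by (metis mult_cancel_right2)
    then show ?thesis using qd True k by simp
  next
    case False
    have "NN q u (\<lambda>c. if c = k then 1 else 0) c0 k = NN q t u c0 k" using H k c0 by blast
    then have "u c0 = q $$ (c0,k) * t k * u c0" using False t0[OF c0 False] by (simp add: NN_def)
    then have "1 = q $$ (c0,k) * t k" using uc0 by (metis mult_cancel_right2)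
    then have "q $$ (k,c0) = q $$ (k,c0) * q $$ (c0,k) * t k" by (simp add: mult.assoc)
    then show ?thesis using qinv k c0 by simp
  qed
  show "l < n \<Longrightarrow> t l = (if l = k then q $$ (k,c0) else 0)"
    using t0 tk by auto
qed

lemma NN_cong:
  assumes "u c = u' c" "u d = u' d" "v c = v' c" "v d = v' d"
  shows "NN q u v c d = NN q u' v' c d"
  using assms by (simp add: NN_def)

lemma NN_lin2:
  "NN q u (\<lambda>c. \<Sum>l\<in>L. a l * v l c) c d = (\<Sum>l\<in>L. a l * NN q u (v l) c d)"
  by (simp add: NN_def sum_distrib_left sum.distrib algebra_simps)

lemma NN_lin1:
  "NN q (\<lambda>c. \<Sum>l\<in>L. a l * v l c) u c d = (\<Sum>l\<in>L. a l * NN q (v l) u c d)"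
  by (simp add: NN_def sum_distrib_left sum_distrib_right sum.distrib algebra_simps)



lemma qrel_in_ideal: assumes "i < n" "j < n" shows "qrel q i j \<in> qideal q n"
proof -
  have "fa_mult (fa_mult (fa_word []) (qrel q i j)) (fa_word []) \<in> qideal q n"
    by (intro qideal.gen fa_word_elems assms) auto
  then show ?thesis by (simp add: fa_mult_unit_l fa_mult_unit_r)
qed

definition Lf :: "'k::field mat \<Rightarrow> (nat list \<Rightarrow> 'k) \<Rightarrow> nat \<Rightarrow> nat \<Rightarrow> 'k" where
  "Lf q f c d = (if c = d then f [c,c] else f [c,d] + q $$ (c,d) * f [d,c])"

lemma qrel_0: "qrel q i j [] = 0" "qrel q i j [x] = 0"
  by (simp_all add: qrel_def fa_word_def)

lemma gen_2: "fa_mult (fa_mult a (qrel q i j)) b [x,y] = a [] * qrel q i j [x,y] * b []"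
  by (simp add: fa_mult_2 fa_mult_1 fa_mult_Nil qrel_0)

lemma Lf_qrel:
  assumes qinv: "\<forall>i<n. \<forall>j<n. q $$ (i,j) * q $$ (j,i) = 1"
    and qd: "\<forall>i<n. q $$ (i,i) = 1" and "i < n" "j < n"
  shows "Lf q (qrel q i j) c d = 0"
proof (cases "c = d")
  case True then show ?thesis using assms by (auto simp: Lf_def qrel_def fa_word_def)
next
  case False
  have "q $$ (i,j) * q $$ (j,i) = 1" using assms by blast
  then show ?thesis using False by (auto simp: Lf_def qrel_def fa_word_def algebra_simps)
qed

lemma Lf_ideal:
  assumes qinv: "\<forall>i<n. \<forall>j<n. q $$ (i,j) * q $$ (j,i) = 1"
    and qd: "\<forall>i<n. q $$ (i,i) = 1"
  shows "f \<in> qideal q n \<Longrightarrow> Lf q f c d = 0"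
proof (induction rule: qideal.induct)
  case zero then show ?case by (simp add: Lf_def)
next
  case (add f g) then show ?case by (auto simp: Lf_def split: if_splits) (simp add: algebra_simps)
next
  case (gen a b i j)
  have "Lf q (fa_mult (fa_mult a (qrel q i j)) b) c d = a [] * b [] * Lf q (qrel q i j) c d"
    by (simp add: Lf_def gen_2 algebra_simps)
  then show ?case using Lf_qrel[OF qinv qd gen(3,4)] by simp
qed

lemma fa_hom_supp:
  assumes "finite S" "{w. f w \<noteq> 0} \<subseteq> S"
  shows "fa_hom n A f u = (\<Sum>w\<in>S. f w * word_img n A w u)"
  unfolding fa_hom_def using assms by (intro sum.mono_neutral_left) auto

lemma word_img_2:
  assumes "c < n" "d < n"
  shows "word_img n A [a,b] [c,d] = A $$ (c,a) * A $$ (d,b)"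
  using assms by (simp add: word_img_def fa_mult_unit_r fa_mult_2 lin_img_def)

lemma fa_hom_qrel:
  assumes qd: "\<forall>i<n. q $$ (i,i) = 1" and "i < n" "c < n" "d < n"
  shows "fa_hom n A (qrel q i j) [c,d] = A $$ (c,j) * A $$ (d,i) - q $$ (i,j) * A $$ (c,i) * A $$ (d,j)"
proof (cases "i = j")
  case True
  have "fa_hom n A (qrel q i j) [c,d] = (\<Sum>w\<in>{[i,i]}. qrel q i j w * word_img n A w [c,d])"
    using qrel_supp[of q i j] True by (intro fa_hom_supp) auto
  then show ?thesis using True qd assms by (simp add: qrel_def fa_word_def)
next
  case False
  have "fa_hom n A (qrel q i j) [c,d] = (\<Sum>w\<in>{[j,i],[i,j]}. qrel q i j w * word_img n A w [c,d])"
    using qrel_supp[of q i j] by (intro fa_hom_supp) auto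
  then show ?thesis using False assms by (simp add: qrel_def fa_word_def word_img_2 algebra_simps)
qed



lemma mult_entry:
  assumes "A \<in> carrier_mat n n" "B \<in> carrier_mat n n" "i < n" "j < n"
  shows "(A * B) $$ (i,j) = (\<Sum>l\<in>{0..<n}. A $$ (i,l) * B $$ (l,j))"
  using assms by (simp add: scalar_prod_def)

lemma core:
  fixes q m :: "'k::field mat"
  assumes qinv: "\<forall>i<n. \<forall>j<n. q $$ (i,j) * q $$ (j,i) = 1"
    and qd: "\<forall>i<n. q $$ (i,i) = 1"
    and m: "m \<in> carrier_mat n n" and dm: "det m \<noteq> 0"
    and H: "\<forall>i<n. \<forall>j<n. \<forall>c<n. \<forall>d<n. NN q (\<lambda>c. m $$ (c,j)) (\<lambda>c. m $$ (c,i)) c d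
               = q $$ (i,j) * NN q (\<lambda>c. m $$ (c,i)) (\<lambda>c. m $$ (c,j)) c d"
    and i: "i < n" and k': "k' < n" and c0: "c0 < n" and d: "d < n"
    and mc0: "m $$ (c0,i) \<noteq> 0"
  shows "q $$ (d,c0) * m $$ (d,k') = q $$ (k',i) * m $$ (d,k')"
proof -
  from det_non_zero_imp_unit[OF m dm, unfolded Units_def, of "()"]
  obtain B where B: "B \<in> carrier_mat n n" and BA: "B * m = 1\<^sub>m n" and AB: "m * B = 1\<^sub>m n"
    by (auto simp: ring_mat_def)
  define y where "y l = (\<lambda>c. m $$ (c,l))" for l
  define t where "t k = (\<lambda>c. \<Sum>l\<in>{0..<n}. (B $$ (l,k) * q $$ (l,i)) * y l c)" for k
  have tk: "t k c' = (if c' = k then q $$ (k,c0) else 0)" if k: "k < n" and c': "c' < n" for k c'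
  proof -
    let ?e = "\<lambda>c. if c = k then (1::'k) else 0"
    have e: "?e c = (\<Sum>l\<in>{0..<n}. B $$ (l,k) * y l c)" if "c < n" for c
    proof -
      have "?e c = (m * B) $$ (c,k)" using AB that k by simp
      also have "\<dots> = (\<Sum>l\<in>{0..<n}. B $$ (l,k) * y l c)"
        using mult_entry[OF m B that k] by (simp add: y_def mult.commute)
      finally show ?thesis .
    qed
    have "\<forall>c<n. \<forall>d<n. NN q (y i) ?e c d = NN q (t k) (y i) c d"
    proof (intro allI impI)
      fix c d assume c: "c < n" and d: "d < n"
      have "NN q (y i) ?e c d = NN q (y i) (\<lambda>c. \<Sum>l\<in>{0..<n}. B $$ (l,k) * y l c) c d"
        using e[OF c] e[OF d] by (intro NN_cong) simp_all
      also have "\<dots> = (\<Sum>l\<in>{0..<n}. B $$ (l,k) * NN q (y i) (y l) c d)" by (rule NN_lin2)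
      also have "\<dots> = (\<Sum>l\<in>{0..<n}. (B $$ (l,k) * q $$ (l,i)) * NN q (y l) (y i) c d)"
      proof (intro sum.cong refl)
        fix l assume "l \<in> {0..<n}"
        then have "l < n" by simp
        then have "NN q (y i) (y l) c d = q $$ (l,i) * NN q (y l) (y i) c d"
          using H[rule_format, of l i c d] i c d unfolding y_def by blast
        then show "B $$ (l,k) * NN q (y i) (y l) c d = (B $$ (l,k) * q $$ (l,i)) * NN q (y l) (y i) c d"
          by simp
      qed
      also have "\<dots> = NN q (t k) (y i) c d" unfolding t_def by (rule NN_lin1[symmetric])
      finally show "NN q (y i) ?e c d = NN q (t k) (y i) c d" .
    qed
    then show ?thesis using supp_lemma[OF qinv qd k c0, of "y i" "t k" c'] mc0 c'
      by (simp add: y_def)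
  qed
  have "(\<Sum>k\<in>{0..<n}. t k d * m $$ (k,k')) = (\<Sum>k\<in>{0..<n}. if k = d then q $$ (d,c0) * m $$ (d,k') else 0)"
    by (intro sum.cong refl) (use tk d in auto)
  also have "\<dots> = q $$ (d,c0) * m $$ (d,k')" using d by simp
  finally have 1: "(\<Sum>k\<in>{0..<n}. t k d * m $$ (k,k')) = q $$ (d,c0) * m $$ (d,k')" .
  have "(\<Sum>k\<in>{0..<n}. t k d * m $$ (k,k')) =
        (\<Sum>k\<in>{0..<n}. \<Sum>l\<in>{0..<n}. (q $$ (l,i) * m $$ (d,l)) * (B $$ (l,k) * m $$ (k,k')))"
    unfolding t_def y_def sum_distrib_right by (intro sum.cong refl) (simp add: algebra_simps)
  also have "\<dots> = (\<Sum>l\<in>{0..<n}. (q $$ (l,i) * m $$ (d,l)) * (\<Sum>k\<in>{0..<n}. B $$ (l,k) * m $$ (k,k')))"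
    by (subst sum.swap) (simp add: sum_distrib_left)
  also have "\<dots> = (\<Sum>l\<in>{0..<n}. (q $$ (l,i) * m $$ (d,l)) * (if l = k' then 1 else 0))"
  proof (intro sum.cong refl)
    fix l assume l: "l \<in> {0..<n}"
    have "(\<Sum>k\<in>{0..<n}. B $$ (l,k) * m $$ (k,k')) = (B * m) $$ (l,k')"
      using mult_entry[OF B m _ k'] l by simp
    also have "\<dots> = (if l = k' then 1 else 0)" using BA l k' by simp
    finally show "(q $$ (l,i) * m $$ (d,l)) * (\<Sum>k\<in>{0..<n}. B $$ (l,k) * m $$ (k,k')) =
       (q $$ (l,i) * m $$ (d,l)) * (if l = k' then 1 else 0)" by simp
  qed
  also have "\<dots> = q $$ (k',i) * m $$ (d,k')" using k' by (simp add: if_distrib cong: if_cong)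
  finally show ?thesis using 1 by simp
qed



lemma part2:
  fixes q m :: "'k::field mat"
  assumes qinv: "\<forall>i<n. \<forall>j<n. q $$ (i,j) * q $$ (j,i) = 1"
    and qd: "\<forall>i<n. q $$ (i,i) = 1"
    and mM: "m \<in> Mq q n"
  shows "Skel n m \<subseteq> Pq q n"
proof
  fix p assume "p \<in> Skel n m"
  then have p: "p permutes {..<n}" and sk: "\<forall>i<n. m $$ (p i, i) \<noteq> 0" by (auto simp: Skel_def)
  have m: "m \<in> carrier_mat n n" and dm: "det m \<noteq> 0"
    and c1: "\<forall>f\<in>qideal q n. fa_hom n m f \<in> qideal q n" using mM by (auto simp: Mq_def)
  have H: "\<forall>i<n. \<forall>j<n. \<forall>c<n. \<forall>d<n. NN q (\<lambda>c. m $$ (c,j)) (\<lambda>c. m $$ (c,i)) c d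
               = q $$ (i,j) * NN q (\<lambda>c. m $$ (c,i)) (\<lambda>c. m $$ (c,j)) c d"
  proof (intro allI impI)
    fix i j c d assume i: "i < n" and j: "j < n" and c: "c < n" and d: "d < n"
    have "fa_hom n m (qrel q i j) \<in> qideal q n" using c1 qrel_in_ideal[OF i j] by blast
    then have "Lf q (fa_hom n m (qrel q i j)) c d = 0" by (rule Lf_ideal[OF qinv qd])
    moreover have "Lf q (fa_hom n m (qrel q i j)) c d =
       NN q (\<lambda>c. m $$ (c,j)) (\<lambda>c. m $$ (c,i)) c d - q $$ (i,j) * NN q (\<lambda>c. m $$ (c,i)) (\<lambda>c. m $$ (c,j)) c d"
      using i c d by (simp add: Lf_def NN_def fa_hom_qrel[OF qd] algebra_simps)
    ultimately show "NN q (\<lambda>c. m $$ (c,j)) (\<lambda>c. m $$ (c,i)) c d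
               = q $$ (i,j) * NN q (\<lambda>c. m $$ (c,i)) (\<lambda>c. m $$ (c,j)) c d" by simp
  qed
  have "q $$ (p i, p j) = q $$ (i, j)" if i: "i < n" and j: "j < n" for i j
  proof -
    have pi: "p i < n" and pj: "p j < n" using p i j by (meson lessThan_iff permutes_in_image)+
    have "q $$ (p i, p j) * m $$ (p i, i) = q $$ (i, j) * m $$ (p i, i)"
      by (rule core[OF qinv qd m dm H j i pj pi]) (use sk j in auto)
    then show ?thesis using sk i by simp
  qed
  then show "p \<in> Pq q n" using p by (simp add: Pq_def)
qed

theorem lemma3p4:
  fixes q m :: "'k::field mat" and n :: nat and \<pi> :: "nat \<Rightarrow> nat"
  assumes "n \<ge> 1"
    and "q \<in> carrier_mat n n"
    and "\<forall>i<n. \<forall>j<n. q $$ (i, j) * q $$ (j, i) = 1"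
    and "\<forall>i<n. q $$ (i, i) = 1"
    and "\<pi> permutes {..<n}"
    and "m \<in> carrier_mat n n" and "det m \<noteq> 0"
  shows "(\<pi> \<in> Pq q n \<longrightarrow> perm_matrix n \<pi> \<in> Mq q n) \<and>
         (m \<in> Mq q n \<longrightarrow> Skel n m \<subseteq> Pq q n)"
proof (intro conjI impI)
  assume "\<pi> \<in> Pq q n"
  then show "perm_matrix n \<pi> \<in> Mq q n" by (rule part1)
next
  assume "m \<in> Mq q n"
  then show "Skel n m \<subseteq> Pq q n" by (rule part2[OF assms(3,4)])
qed

end
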